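(* Let $\alpha=(\alpha_1,\ldots,\alpha_n)$ be a composition, and suppose there is $1\le r\le n-1$ with $\alpha_r<\alpha_{r+1}$. Let $w\in S_n$ be a permutation in which the value $r$ appears before the value $r+1$. Then \[x(w)=x(s_rw)\cdot s_r.\]
   Context: A composition is a sequence of $n$ nonnegative integers. The skyline diagram $D(\alpha)$ is the set of boxes $(i,j)$ (row $i$, column $j$, rows numbered top to bottom) with $1\le j\le\alpha_i$. For $w=w_1\cdots w_n\in S_n$, the filling $\mathcal{F}_w(D(\alpha))$ is defined column by column: for each column $j$, for $k=1,\ldots,n$ in turn, place $w_k$ into the topmost still-empty box of column $j$ of $D(\alpha)$ whose row index is $\ge w_k$, skipping $w_k$ if no such box exists. Then $x(w)=(x_1,\ldots,x_n)$, where $x_k$ is the number of appearances of $k$ in $\mathcal{F}_w(D(\alpha))$. Here $s_rw$ is the permutation obtained from $w$ by interchanging the values $r$ and $r+1$, and for $v\in\mathbb{R}^n$, $v\cdot s_r$ is $v$ with its $r$-th and $(r+1)$-th entries swapped. *)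

theory Defs
  imports Main
begin

text \<open>A composition alpha = (alpha_1,...,alpha_n) is a list of naturals of length n;
 alpha_i = alpha ! (i - 1). Rows and columns are numbered from 1.
 A permutation w in S_n is given in one-line notation as a list w_1 ... w_n
 (w_k = w ! (k - 1)) that is a rearrangement of 1..n.\<close>

definition is_perm :: "nat \<Rightarrow> nat list \<Rightarrow> bool" where
  "is_perm n w \<longleftrightarrow> length w = n \<and> distinct w \<and> set w = {1..n}"

definition in_diagram :: "nat list \<Rightarrow> nat \<Rightarrow> nat \<Rightarrow> bool" where
  "in_diagram alpha i j \<longleftrightarrow> 1 \<le> i \<and> i \<le> length alpha \<and> 1 \<le> j \<and> j \<le> alpha ! (i - 1)"

definition place :: "nat list \<Rightarrow> nat \<Rightarrow> nat \<Rightarrow> (nat \<Rightarrow> nat option) \<Rightarrow> (nat \<Rightarrow> nat option)" where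
  "place alpha j v F =
    (let S = {i. v \<le> i \<and> in_diagram alpha i j \<and> F i = None}
     in if S = {} then F else F(Min S := Some v))"

definition fill_column :: "nat list \<Rightarrow> nat list \<Rightarrow> nat \<Rightarrow> (nat \<Rightarrow> nat option)" where
  "fill_column alpha w j = fold (place alpha j) w (\<lambda>_. None)"

definition filling :: "nat list \<Rightarrow> nat list \<Rightarrow> nat \<Rightarrow> nat \<Rightarrow> nat option" where
  "filling alpha w i j = fill_column alpha w j i"

definition xvec :: "nat list \<Rightarrow> nat list \<Rightarrow> nat list" where
  "xvec alpha w = map (\<lambda>k. card {(i, j). in_diagram alpha i j \<and> filling alpha w i j = Some k})
                      [1..<length alpha + 1]"

definition swap_values :: "nat \<Rightarrow> nat list \<Rightarrow> nat list" where
  "swap_values r w = map (\<lambda>v. if v = r then r + 1 else if v = r + 1 then r else v) w"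

definition swap_entries :: "nat list \<Rightarrow> nat \<Rightarrow> nat list" where
  "swap_entries v r = v[r - 1 := v ! r, r := v ! (r - 1)]"

end

theory Submission
  imports Defs
begin

definition sw :: "nat \<Rightarrow> nat \<Rightarrow> nat" where
  "sw r v = (if v = r then r + 1 else if v = r + 1 then r else v)"

definition sg :: "nat \<Rightarrow> bool \<Rightarrow> nat \<Rightarrow> nat" where
  "sg r b i = (if b then sw r i else i)"

definition Rel :: "nat \<Rightarrow> bool \<Rightarrow> (nat \<Rightarrow> nat option) \<Rightarrow> (nat \<Rightarrow> nat option) \<Rightarrow> bool" where
  "Rel r b F F' = (\<forall>i. F' (sg r b i) = map_option (sw r) (F i))"

definition Inv :: "nat list \<Rightarrow> nat \<Rightarrow> nat \<Rightarrow> bool \<Rightarrow> (nat \<Rightarrow> nat option) \<Rightarrow> bool" where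
  "Inv alpha j r b F = ((in_diagram alpha r j \<longrightarrow> F r \<noteq> None) \<and>
     (b \<longrightarrow> in_diagram alpha r j \<and> in_diagram alpha (r+1) j \<and> F r \<noteq> None \<and> F (r+1) \<noteq> None))"

definition Sp :: "nat \<Rightarrow> (nat \<Rightarrow> nat option) \<Rightarrow> (nat \<Rightarrow> nat option) \<Rightarrow> bool" where
  "Sp r F F' = (F r = Some r \<and> F (r+1) = None \<and> F' r = None \<and> F' (r+1) = Some (r+1) \<and>
     (\<forall>i. i \<noteq> r \<and> i \<noteq> r+1 \<longrightarrow> F' i = F i \<and> map_option (sw r) (F i) = F i))"

lemma sw_sw[simp]: "sw r (sw r v) = v" by (simp add: sw_def)
lemma sg_sg[simp]: "sg r b (sg r b v) = v" by (simp add: sg_def)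
lemma sw_eq_iff[simp]: "(sw r a = sw r b) = (a = b)" by (metis sw_sw)

lemma Rel_inv: "Rel r b F F' \<Longrightarrow> F' i = map_option (sw r) (F (sg r b i))"
  unfolding Rel_def by (metis sg_sg)

lemma le_sw: "i \<noteq> r \<Longrightarrow> (sw r v \<le> i) = (v \<le> i)"
  by (auto simp: sw_def)

lemma map_sw_id: "r \<notin> set l \<Longrightarrow> r+1 \<notin> set l \<Longrightarrow> map (sw r) l = l"
  by (induction l) (auto simp: sw_def)

context
  fixes alpha :: "nat list" and j :: nat
begin

lemma fin_S: "finite {i. v \<le> i \<and> in_diagram alpha i j \<and> F i = None}"
  by (rule finite_subset[of _ "{..length alpha}"]) (auto simp: in_diagram_def)

lemma place_cases:
  obtains (none) "\<forall>i. v \<le> i \<longrightarrow> in_diagram alpha i j \<longrightarrow> F i \<noteq> None" "place alpha j v F = F"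
  | (some) m where "v \<le> m" "in_diagram alpha m j" "F m = None"
     "\<forall>i. v \<le> i \<longrightarrow> in_diagram alpha i j \<longrightarrow> F i = None \<longrightarrow> m \<le> i"
     "place alpha j v F = F(m := Some v)"
proof (cases "{i. v \<le> i \<and> in_diagram alpha i j \<and> F i = None} = {}")
  case True
  have eq: "place alpha j v F = F" unfolding place_def Let_def by (rule if_P) fact
  show ?thesis by (rule none) (use True eq in auto)
next
  case False
  let ?S = "{i. v \<le> i \<and> in_diagram alpha i j \<and> F i = None}"
  have a: "Min ?S \<in> ?S" using Min_in[OF fin_S False] .
  have b: "\<forall>i\<in>?S. Min ?S \<le> i" using Min_le[OF fin_S] by blast
  have eq: "place alpha j v F = F(Min ?S := Some v)" unfolding place_def Let_def by (rule if_not_P) fact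
  show ?thesis by (rule some[of "Min ?S"]) (use a b eq in auto)
qed

lemma place_some:
  assumes "v \<le> m" "in_diagram alpha m j" "F m = None"
     "\<forall>i. v \<le> i \<longrightarrow> in_diagram alpha i j \<longrightarrow> F i = None \<longrightarrow> m \<le> i"
  shows "place alpha j v F = F(m := Some v)"
proof -
  let ?S = "{i. v \<le> i \<and> in_diagram alpha i j \<and> F i = None}"
  have "Min ?S = m" by (rule Min_eqI[OF fin_S]) (use assms in auto)
  moreover have "?S \<noteq> {}" using assms by auto
  then have "place alpha j v F = F(Min ?S := Some v)" unfolding place_def Let_def by (rule if_not_P)
  ultimately show ?thesis by simp
qed

lemma place_none:
  "\<forall>i. v \<le> i \<longrightarrow> in_diagram alpha i j \<longrightarrow> F i \<noteq> None \<Longrightarrow> place alpha j v F = F"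
  by (auto simp: place_def Let_def)

lemma place_mono: "F i \<noteq> None \<Longrightarrow> place alpha j v F i \<noteq> None"
  by (cases rule: place_cases[of v F]) auto

lemma place_vals: "place alpha j v F i = F i \<or> place alpha j v F i = Some v"
  by (cases rule: place_cases[of v F]) auto

lemma fold_vals:
  "(\<forall>i u. F i = Some u \<longrightarrow> P u) \<Longrightarrow> (\<forall>u\<in>set l. P u) \<Longrightarrow>
   (\<forall>i u. fold (place alpha j) l F i = Some u \<longrightarrow> P u)"
proof (induction l arbitrary: F)
  case Nil then show ?case by simp
next
  case (Cons a l)
  have "\<forall>i u. place alpha j a F i = Some u \<longrightarrow> P u"
    using Cons.prems place_vals by (metis list.set_intros(1) option.inject)
  then show ?case using Cons by simp
qed

lemma blocked:
  assumes "Rel r b F F'" "Inv alpha j r b F" "in_diagram alpha i j" "F' i = None"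
  shows "i \<noteq> r \<and> (b \<longrightarrow> i \<noteq> r+1) \<and> sg r b i = i \<and> F i = None"
proof -
  have "F (sg r b i) = None" using Rel_inv[OF assms(1), of i] assms(4) by simp
  then show ?thesis using assms(2,3)
    by (cases b) (auto simp: Inv_def sg_def sw_def split: if_splits)
qed

lemma L2_step:
  assumes R: "Rel r b F F'" and I: "Inv alpha j r b F"
  shows "Rel r b (place alpha j v F) (place alpha j (sw r v) F') \<and> Inv alpha j r b (place alpha j v F)"
proof (cases rule: place_cases[of v F])
  case none
  have "place alpha j (sw r v) F' = F'"
  proof (rule place_none, intro allI impI notI)
    fix i assume a: "sw r v \<le> i" "in_diagram alpha i j" "F' i = None"
    from blocked[OF R I a(2,3)] have "i \<noteq> r" "F i = None" by auto
    with a le_sw none show False by metis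
  qed
  then show ?thesis using none R I by simp
next
  case (some m)
  from some have nb: "m \<noteq> r" "b \<longrightarrow> m \<noteq> r+1" using I by (auto simp: Inv_def)
  have sgm: "sg r b m = m" using nb by (auto simp: sg_def sw_def)
  have F'm: "F' m = None" using Rel_inv[OF R, of m] sgm some by simp
  have pl': "place alpha j (sw r v) F' = F'(m := Some (sw r v))"
  proof (rule place_some)
    show "sw r v \<le> m" using some nb le_sw by metis
    show "in_diagram alpha m j" using some by simp
    show "F' m = None" by fact
    show "\<forall>i. sw r v \<le> i \<longrightarrow> in_diagram alpha i j \<longrightarrow> F' i = None \<longrightarrow> m \<le> i"
    proof (intro allI impI)
      fix i assume a: "sw r v \<le> i" "in_diagram alpha i j" "F' i = None"
      from blocked[OF R I a(2,3)] have "i \<noteq> r" "F i = None" by auto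
      with a le_sw some show "m \<le> i" by metis
    qed
  qed
  have "Rel r b (F(m := Some v)) (F'(m := Some (sw r v)))"
    unfolding Rel_def
  proof
    fix i
    show "(F'(m := Some (sw r v))) (sg r b i) = map_option (sw r) ((F(m := Some v)) i)"
    proof (cases "i = m")
      case True then show ?thesis using sgm by simp
    next
      case False
      then have "sg r b i \<noteq> m" using sgm by (metis sg_sg)
      then show ?thesis using False R by (simp add: Rel_def)
    qed
  qed
  moreover have "Inv alpha j r b (F(m := Some v))" using I by (auto simp: Inv_def)
  ultimately show ?thesis using some pl' by simp
qed

lemma L2_fold:
  "Rel r b F F' \<Longrightarrow> Inv alpha j r b F \<Longrightarrow>
   Rel r b (fold (place alpha j) l F) (fold (place alpha j) (map (sw r) l) F') \<and>
   Inv alpha j r b (fold (place alpha j) l F)"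
proof (induction l arbitrary: F F')
  case Nil then show ?case by simp
next
  case (Cons a l)
  have s: "Rel r b (place alpha j a F) (place alpha j (sw r a) F') \<and> Inv alpha j r b (place alpha j a F)"
    by (rule L2_step[OF Cons.prems])
  show ?case using Cons.IH[OF s[THEN conjunct1] s[THEN conjunct2]] by simp
qed

lemma I0_fold:
  assumes "in_diagram alpha r j"
  shows "(F r = None \<longrightarrow> F (r+1) = None) \<Longrightarrow> r \<notin> set l \<Longrightarrow> r+1 \<notin> set l \<Longrightarrow>
    (fold (place alpha j) l F r = None \<longrightarrow> fold (place alpha j) l F (r+1) = None)"
proof (induction l arbitrary: F)
  case Nil then show ?case by simp
next
  case (Cons v l)
  have "place alpha j v F r = None \<longrightarrow> place alpha j v F (r+1) = None"
  proof (cases rule: place_cases[of v F])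
    case none then show ?thesis using Cons.prems by simp
  next
    case (some m)
    show ?thesis
    proof
      assume h: "place alpha j v F r = None"
      then have "m \<noteq> r" "F r = None" using some by (auto split: if_splits)
      moreover have "m \<noteq> r+1"
      proof
        assume "m = r+1"
        then have "v < r" using some Cons.prems by auto
        then have "m \<le> r" using some \<open>F r = None\<close> assms by auto
        then show False using \<open>m = r+1\<close> by simp
      qed
      ultimately show "place alpha j v F (r+1) = None" using some Cons.prems by simp
    qed
  qed
  then show ?case using Cons by simp
qed

lemma L3_step:
  assumes S: "Sp r F F'" and v: "v \<noteq> r" "v \<noteq> r+1"
    and D: "in_diagram alpha r j" "in_diagram alpha (r+1) j"
  shows "Sp r (place alpha j v F) (place alpha j v F') \<or>
    (Rel r True (place alpha j v F) (place alpha j v F') \<and> Inv alpha j r True (place alpha j v F))"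
proof (cases rule: place_cases[of v F])
  case none
  have "v > r+1" using none S D by (metis Sp_def not_le_imp_less le_less)
  have "place alpha j v F' = F'"
  proof (rule place_none, intro allI impI)
    fix i assume "v \<le> i" "in_diagram alpha i j"
    then show "F' i \<noteq> None" using none S \<open>v > r+1\<close> by (auto simp: Sp_def)
  qed
  then show ?thesis using none S by simp
next
  case (some m)
  have mr: "m \<noteq> r" using some S by (auto simp: Sp_def)
  show ?thesis
  proof (cases "m = r+1")
    case True
    have vr: "v < r" using some True v by auto
    have pl': "place alpha j v F' = F'(r := Some v)"
    proof (rule place_some)
      show "v \<le> r" using vr by simp
      show "in_diagram alpha r j" using D by simp
      show "F' r = None" using S by (simp add: Sp_def)
      show "\<forall>i. v \<le> i \<longrightarrow> in_diagram alpha i j \<longrightarrow> F' i = None \<longrightarrow> r \<le> i"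
      proof (intro allI impI)
        fix i assume a: "v \<le> i" "in_diagram alpha i j" "F' i = None"
        show "r \<le> i"
        proof (cases "i = r \<or> i = r+1")
          case True then show ?thesis by auto
        next
          case False
          then have "F i = None" using a S by (auto simp: Sp_def)
          then show ?thesis using some a True by force
        qed
      qed
    qed
    have "Rel r True (F(r+1 := Some v)) (F'(r := Some v))"
      unfolding Rel_def
    proof
      fix i
      show "(F'(r := Some v)) (sg r True i) = map_option (sw r) ((F(r+1 := Some v)) i)"
        using S v by (auto simp: Sp_def sg_def sw_def)
    qed
    moreover have "Inv alpha j r True (F(r+1 := Some v))" using S D by (auto simp: Inv_def Sp_def)
    ultimately show ?thesis using some pl' True by simp
  next
    case False
    have F'm: "F' m = None" using S some mr False by (auto simp: Sp_def)
    have pl': "place alpha j v F' = F'(m := Some v)"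
    proof (rule place_some)
      show "v \<le> m" "in_diagram alpha m j" using some by auto
      show "F' m = None" by fact
      show "\<forall>i. v \<le> i \<longrightarrow> in_diagram alpha i j \<longrightarrow> F' i = None \<longrightarrow> m \<le> i"
      proof (intro allI impI)
        fix i assume a: "v \<le> i" "in_diagram alpha i j" "F' i = None"
        show "m \<le> i"
        proof (cases "i = r \<or> i = r+1")
          case True
          have "m \<le> r+1" using some(4)[rule_format, of "r+1"] a(1) True S D by (auto simp: Sp_def)
          then show ?thesis using True mr \<open>m \<noteq> r+1\<close> by auto
        next
          case False
          then have "F i = None" using a S by (auto simp: Sp_def)
          then show ?thesis using some a by force
        qed
      qed
    qed
    have "Sp r (F(m := Some v)) (F'(m := Some v))"
      using S mr False v by (auto simp: Sp_def sw_def)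
    then show ?thesis using some pl' by simp
  qed
qed

lemma L3_fold:
  assumes D: "in_diagram alpha r j" "in_diagram alpha (r+1) j"
  shows "Sp r F F' \<Longrightarrow> r \<notin> set l \<Longrightarrow> r+1 \<notin> set l \<Longrightarrow>
    Sp r (fold (place alpha j) l F) (fold (place alpha j) l F') \<or>
    (Rel r True (fold (place alpha j) l F) (fold (place alpha j) l F') \<and>
     Inv alpha j r True (fold (place alpha j) l F))"
proof (induction l arbitrary: F F')
  case Nil then show ?case by simp
next
  case (Cons v l)
  from L3_step[OF Cons.prems(1) _ _ D, of v] Cons.prems
  consider "Sp r (place alpha j v F) (place alpha j v F')"
    | "Rel r True (place alpha j v F) (place alpha j v F')"
      "Inv alpha j r True (place alpha j v F)" by auto
  then show ?case
  proof cases
    case 1 then show ?thesis using Cons by simp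
  next
    case 2
    have "map (sw r) l = l" using Cons.prems map_sw_id by simp
    then show ?thesis using L2_fold[OF 2, of l] by simp
  qed
qed

lemma at_b:
  assumes S: "Sp r F F'" and D: "in_diagram alpha r j" "in_diagram alpha (r+1) j"
  shows "Rel r True (place alpha j (r+1) F) (place alpha j r F') \<and>
         Inv alpha j r True (place alpha j (r+1) F)"
proof -
  have p1: "place alpha j (r+1) F = F(r+1 := Some (r+1))"
    by (rule place_some) (use S D in \<open>auto simp: Sp_def\<close>)
  have p2: "place alpha j r F' = F'(r := Some r)"
    by (rule place_some) (use S D in \<open>auto simp: Sp_def\<close>)
  have "Rel r True (F(r+1 := Some (r+1))) (F'(r := Some r))"
    unfolding Rel_def
  proof
    fix i
    show "(F'(r := Some r)) (sg r True i) = map_option (sw r) ((F(r+1 := Some (r+1))) i)"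
      using S by (auto simp: Sp_def sg_def sw_def)
  qed
  moreover have "Inv alpha j r True (F(r+1 := Some (r+1)))" using S D by (auto simp: Inv_def Sp_def)
  ultimately show ?thesis using p1 p2 by simp
qed

lemma column:
  assumes w: "w = p @ r # q @ (r+1) # t" and dw: "distinct w"
    and ineq: "alpha ! (r - 1) < alpha ! r" and rl: "r + 1 \<le> length alpha" and r1: "1 \<le> r"
  shows "\<exists>b. Rel r b (fill_column alpha w j) (fill_column alpha (map (sw r) w) j) \<and>
     (b \<longrightarrow> in_diagram alpha r j \<and> in_diagram alpha (r+1) j)"
proof -
  have np: "r \<notin> set p" "r+1 \<notin> set p" "r \<notin> set q" "r+1 \<notin> set q" "r \<notin> set t" "r+1 \<notin> set t"
    using dw w by auto
  define F0 where "F0 = fold (place alpha j) p (\<lambda>_. None)"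
  have vals: "\<forall>i u. F0 i = Some u \<longrightarrow> u \<noteq> r \<and> u \<noteq> r+1"
    unfolding F0_def by (rule fold_vals) (use np in auto)
  have F0s: "map_option (sw r) (F0 i) = F0 i" for i
    using vals by (cases "F0 i") (auto simp: sw_def)
  have fw: "fill_column alpha w j = fold (place alpha j) (r # q @ (r+1) # t) F0"
    by (simp add: fill_column_def w F0_def)
  have mw: "map (sw r) w = p @ (r+1) # q @ r # map (sw r) t"
    using w np map_sw_id by (simp add: sw_def)
  have fw': "fill_column alpha (map (sw r) w) j = fold (place alpha j) (map (sw r) t)
     (place alpha j r (fold (place alpha j) q (place alpha j (r+1) F0)))"
    by (simp add: fill_column_def mw F0_def)
  show ?thesis
  proof (cases "in_diagram alpha r j \<and> F0 r = None")
    case False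
    have R: "Rel r False F0 F0" using F0s by (simp add: Rel_def sg_def)
    have I: "Inv alpha j r False F0" using False by (simp add: Inv_def)
    have "fill_column alpha (map (sw r) w) j =
        fold (place alpha j) (map (sw r) (r # q @ (r+1) # t)) F0"
      using map_sw_id[OF np(1,2)] by (simp add: fill_column_def w F0_def)
    then have "Rel r False (fill_column alpha w j) (fill_column alpha (map (sw r) w) j)"
      using L2_fold[OF R I, of "r # q @ (r+1) # t"] fw by simp
    then show ?thesis by blast
  next
    case True
    have D1: "in_diagram alpha (r+1) j" using True ineq rl r1 by (auto simp: in_diagram_def)
    have F0r1: "F0 (r+1) = None"
      using I0_fold[of r "\<lambda>_. None" p] True np unfolding F0_def by auto
    have p1: "place alpha j r F0 = F0(r := Some r)"
      by (rule place_some) (use True in auto)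
    have p2: "place alpha j (r+1) F0 = F0(r+1 := Some (r+1))"
      by (rule place_some) (use True D1 F0r1 in auto)
    have Sp0: "Sp r (F0(r := Some r)) (F0(r+1 := Some (r+1)))"
      using True F0r1 F0s by (auto simp: Sp_def)
    let ?G = "fold (place alpha j) q (F0(r := Some r))"
    let ?G' = "fold (place alpha j) q (F0(r+1 := Some (r+1)))"
    have RI: "Rel r True (place alpha j (r+1) ?G) (place alpha j r ?G') \<and>
              Inv alpha j r True (place alpha j (r+1) ?G)"
    proof -
      from L3_fold[OF _ D1 Sp0] True np
      consider "Sp r ?G ?G'" | "Rel r True ?G ?G'" "Inv alpha j r True ?G" by auto
      then show ?thesis
      proof cases
        case 1 then show ?thesis using at_b[OF 1] True D1 by simp
      next
        case 2 then show ?thesis using L2_step[OF 2, of "r+1"] by (simp add: sw_def)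
      qed
    qed
    have "Rel r True (fill_column alpha w j) (fill_column alpha (map (sw r) w) j)"
      using L2_fold[OF RI[THEN conjunct1] RI[THEN conjunct2], of t] fw fw' p1 p2 by simp
    then show ?thesis using True D1 by blast
  qed
qed

end

lemma card_eq:
  assumes "\<forall>j. Rel r (bf j) (G j) (G' j) \<and> (bf j \<longrightarrow> in_diagram alpha r j \<and> in_diagram alpha (r+1) j)"
  shows "card {(i,j). in_diagram alpha i j \<and> G j i = Some k} =
         card {(i,j). in_diagram alpha i j \<and> G' j i = Some (sw r k)}"
proof -
  let ?g = "\<lambda>(i,j). (sg r (bf j) i, j)"
  let ?A = "{(i,j). in_diagram alpha i j \<and> G j i = Some k}"
  let ?B = "{(i,j). in_diagram alpha i j \<and> G' j i = Some (sw r k)}"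
  have dg: "in_diagram alpha (sg r (bf j) i) j = in_diagram alpha i j" for i j
    using assms[rule_format, of j] by (auto simp: sg_def sw_def)
  have inj: "inj_on ?g ?A"
    by (rule inj_onI) (auto, metis sg_sg)
  have G'eq: "G' j (sg r (bf j) i) = map_option (sw r) (G j i)" for i j
    using assms by (simp add: Rel_def)
  have "?g ` ?A = ?B"
  proof
    show "?g ` ?A \<subseteq> ?B" using dg G'eq by auto
    show "?B \<subseteq> ?g ` ?A"
    proof
      fix x assume "x \<in> ?B"
      then obtain i j where x: "x = (i,j)" "in_diagram alpha i j" "G' j i = Some (sw r k)" by auto
      let ?i = "sg r (bf j) i"
      have "G' j (sg r (bf j) ?i) = map_option (sw r) (G j ?i)" by (rule G'eq)
      then have "G j ?i = Some k" using x by (cases "G j ?i") auto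
      moreover have "in_diagram alpha ?i j" using dg x by simp
      ultimately have "(?i, j) \<in> ?A" by simp
      moreover have "?g (?i, j) = x" using x by simp
      ultimately show "x \<in> ?g ` ?A" by force
    qed
  qed
  then show ?thesis using card_image[OF inj] by simp
qed

theorem proposition4p4:
  fixes alpha w :: "nat list" and r :: nat
  assumes "length alpha = n"
    and "1 \<le> r" and "r \<le> n - 1"
    and "alpha ! (r - 1) < alpha ! r"
    and "is_perm n w"
    and "\<exists>a b. a < b \<and> b < length w \<and> w ! a = r \<and> w ! b = r + 1"
  shows "xvec alpha w = swap_entries (xvec alpha (swap_values r w)) r"
proof -
  obtain a b where ab: "a < b" "b < length w" "w ! a = r" "w ! b = r + 1" using assms(6) by blast
  define p where "p = take a w"
  define q where "q = take (b - Suc a) (drop (Suc a) w)"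
  define t where "t = drop (Suc b) w"
  have w: "w = p @ r # q @ (r+1) # t"
  proof -
    have "w = take a w @ w ! a # drop (Suc a) w" using ab by (metis id_take_nth_drop order.strict_trans)
    moreover have "drop (Suc a) w = q @ (r+1) # t"
    proof -
      have e1: "drop (Suc a) w = q @ drop (b - Suc a) (drop (Suc a) w)"
        unfolding q_def by (rule append_take_drop_id[symmetric])
      have e2: "drop (b - Suc a) (drop (Suc a) w) = drop b w"
        using ab by simp
      have e3: "drop b w = (r+1) # t"
        unfolding t_def using Cons_nth_drop_Suc[OF ab(2)] ab(4) by simp
      show ?thesis using e1 unfolding e2 e3 .
    qed
    ultimately show ?thesis using ab by (simp add: p_def)
  qed
  have dw: "distinct w" using assms(5) by (simp add: is_perm_def)
  have rl: "r + 1 \<le> length alpha" using assms by simp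
  have sv: "swap_values r w = map (sw r) w" by (simp add: swap_values_def sw_def)
  have "\<forall>j. \<exists>b. Rel r b (fill_column alpha w j) (fill_column alpha (map (sw r) w) j) \<and>
     (b \<longrightarrow> in_diagram alpha r j \<and> in_diagram alpha (r+1) j)"
    using column[OF w dw assms(4) rl assms(2)] by blast
  then obtain bf where bf: "\<forall>j. Rel r (bf j) (fill_column alpha w j) (fill_column alpha (map (sw r) w) j) \<and>
     (bf j \<longrightarrow> in_diagram alpha r j \<and> in_diagram alpha (r+1) j)" by metis
  define c where "c = (\<lambda>u k. card {(i, j). in_diagram alpha i j \<and> filling alpha u i j = Some k})"
  have ceq: "c w k = c (map (sw r) w) (sw r k)" for k
    unfolding c_def filling_def using card_eq[OF bf] by simp
  have xn: "xvec alpha u ! i = c u (Suc i)" if "i < length alpha" for u i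
    using that by (simp add: xvec_def c_def del: upt_Suc)
  have len: "length (xvec alpha u) = length alpha" for u by (simp add: xvec_def del: upt_Suc)
  show ?thesis
  proof (rule nth_equalityI)
    show "length (xvec alpha w) = length (swap_entries (xvec alpha (swap_values r w)) r)"
      by (simp add: swap_entries_def len)
    fix i assume "i < length (xvec alpha w)"
    then have i: "i < length alpha" by (simp add: len)
    have rr: "r < length alpha" "r - 1 < length alpha" using rl by auto
    show "xvec alpha w ! i = swap_entries (xvec alpha (swap_values r w)) r ! i"
      using i rr assms(2) ceq[of "Suc i"]
      by (auto simp: swap_entries_def len sv xn nth_list_update sw_def)
  qed
qed

end
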